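(* Let $(Q,I)$ be a special biserial bound quiver over an algebraically closed field $k$. Let $u-\lambda v\in I$ be a binomial relation from a point $x$ to a point $y$ (so $u\neq v$ are parallel paths from $x$ to $y$, $u,v\notin I$, $\lambda\in k\setminus\{0\}$). Suppose that $u$ starts with a simple cycle $a=\alpha_1\cdots\alpha_r$ at $x$ (i.e. $u=ap$ for some path $p$). Then: (a) If $x\neq y$: (1) if $u$ and $v$ have at least one arrow in common, then there exist a path $p$ from $x$ to $y$ and a nontrivial cycle $b$ at $y$ such that $u=ap$ and $v=pb$; (2) if $u$ and $v$ have no arrow in common, then there is a decomposition $a=a_1a_2$ with $a_1,a_2$ nontrivial paths, and a natural number $n\geq 1$, such that $u=a^na_1$. (b) If $x=y$, then there exists a simple cycle $b=\beta_1\cdots\beta_s$ at $x$ (having no arrow in common with $a$) such that one of the following holds, for some natural numbers $n,m$ and some scalar $\lambda\in k\setminus\{0\}$: (3) the relation is $a^n-\lambda b^m$, and $\alpha_r\beta_1\in I$, $\beta_s\alpha_1\in I$; (4) the relation is $(ab)^m-\lambda(ba)^m$, and $\alpha_r\alpha_1\in I$, $\beta_s\beta_1\in I$; (5) the relation is $(ab)^ma-\lambda(ba)^mb$, and $\alpha_r\alpha_1\in I$, $\beta_s\beta_1\in I$.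
   Context: A bound quiver $(Q,I)$ consists of a finite quiver $Q$ and an admissible ideal $I$ of the path algebra $kQ$, i.e. $(kQ^+)^m\subseteq I\subseteq (kQ^+)^2$ for some $m\geq 2$, where $kQ^+$ is the ideal generated by the arrows. Paths are composed left to right ($\alpha\beta$ means $\alpha$ then $\beta$). It is special biserial if (i) every point is the source of at most two arrows and the target of at most two arrows, and (ii) for every arrow $\alpha:x\to y$ there is at most one arrow $\beta$ starting at $y$ with $\alpha\beta\notin I$ and at most one arrow $\gamma$ ending at $x$ with $\gamma\alpha\notin I$. A binomial relation is an element $u-\lambda v\in I$ with $u,v$ distinct parallel paths not in $I$ and $\lambda\neq0$. A cycle at $x$ is a path from $x$ to $x$; it is simple if $x$ occurs only at its beginning and end. *)

theory Defs
  imports "HOL-Computational_Algebra.Polynomial"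
begin

(* A path is a pair (x, as): start vertex x and the list of arrows (composed left to right).
   The trivial path e_x is (x, []). *)

type_synonym ('v,'a) qpath = "'v \<times> 'a list"

definition finite_quiver :: "'v set \<Rightarrow> 'a set \<Rightarrow> ('a \<Rightarrow> 'v) \<Rightarrow> ('a \<Rightarrow> 'v) \<Rightarrow> bool" where
  "finite_quiver V E s t \<longleftrightarrow> finite V \<and> finite E \<and> (\<forall>\<alpha>\<in>E. s \<alpha> \<in> V \<and> t \<alpha> \<in> V)"

definition is_path :: "'v set \<Rightarrow> 'a set \<Rightarrow> ('a \<Rightarrow> 'v) \<Rightarrow> ('a \<Rightarrow> 'v) \<Rightarrow> ('v,'a) qpath \<Rightarrow> bool" where
  "is_path V E s t p \<longleftrightarrow> fst p \<in> V \<and> set (snd p) \<subseteq> E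
     \<and> (snd p \<noteq> [] \<longrightarrow> s (hd (snd p)) = fst p)
     \<and> (\<forall>i. Suc i < length (snd p) \<longrightarrow> t (snd p ! i) = s (snd p ! Suc i))"

definition pend :: "('a \<Rightarrow> 'v) \<Rightarrow> ('v,'a) qpath \<Rightarrow> 'v" where
  "pend t p = (if snd p = [] then fst p else t (last (snd p)))"

definition pcomp :: "('v,'a) qpath \<Rightarrow> ('v,'a) qpath \<Rightarrow> ('v,'a) qpath" where
  "pcomp p q = (fst p, snd p @ snd q)"

definition ppow :: "('v,'a) qpath \<Rightarrow> nat \<Rightarrow> ('v,'a) qpath" where
  "ppow p n = (fst p, concat (replicate n (snd p)))"

definition apath :: "('a \<Rightarrow> 'v) \<Rightarrow> 'a \<Rightarrow> 'a \<Rightarrow> ('v,'a) qpath" where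
  "apath s \<alpha> \<beta> = (s \<alpha>, [\<alpha>, \<beta>])"

(* Elements of the path algebra kQ: finitely supported k-valued functions on paths. *)
definition basis :: "('v,'a) qpath \<Rightarrow> ('v,'a) qpath \<Rightarrow> 'k::field" where
  "basis p = (\<lambda>w. if w = p then 1 else 0)"

definition in_kQ :: "'v set \<Rightarrow> 'a set \<Rightarrow> ('a \<Rightarrow> 'v) \<Rightarrow> ('a \<Rightarrow> 'v) \<Rightarrow> (('v,'a) qpath \<Rightarrow> 'k::field) \<Rightarrow> bool" where
  "in_kQ V E s t f \<longleftrightarrow> finite {w. f w \<noteq> 0} \<and> (\<forall>w. f w \<noteq> 0 \<longrightarrow> is_path V E s t w)"

(* multiplication in kQ (convolution over the ways of splitting a path) *)
definition pmult :: "('a \<Rightarrow> 'v) \<Rightarrow> (('v,'a) qpath \<Rightarrow> 'k::field) \<Rightarrow> (('v,'a) qpath \<Rightarrow> 'k) \<Rightarrow> ('v,'a) qpath \<Rightarrow> 'k" where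
  "pmult t f g = (\<lambda>(x, ws). \<Sum>i\<in>{0..length ws}. f (x, take i ws) * g (pend t (x, take i ws), drop i ws))"

definition is_ideal :: "'v set \<Rightarrow> 'a set \<Rightarrow> ('a \<Rightarrow> 'v) \<Rightarrow> ('a \<Rightarrow> 'v) \<Rightarrow> (('v,'a) qpath \<Rightarrow> 'k::field) set \<Rightarrow> bool" where
  "is_ideal V E s t I \<longleftrightarrow> I \<subseteq> {f. in_kQ V E s t f} \<and> (\<lambda>w. 0) \<in> I
     \<and> (\<forall>f\<in>I. \<forall>g\<in>I. (\<lambda>w. f w + g w) \<in> I)
     \<and> (\<forall>c. \<forall>f\<in>I. (\<lambda>w. c * f w) \<in> I)
     \<and> (\<forall>f\<in>I. \<forall>g. in_kQ V E s t g \<longrightarrow> pmult t g f \<in> I \<and> pmult t f g \<in> I)"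

(* admissible: (kQ^+)^m \<subseteq> I \<subseteq> (kQ^+)^2 for some m \<ge> 2;
   (kQ^+)^j is the span of the paths of length \<ge> j *)
definition admissible :: "'v set \<Rightarrow> 'a set \<Rightarrow> ('a \<Rightarrow> 'v) \<Rightarrow> ('a \<Rightarrow> 'v) \<Rightarrow> (('v,'a) qpath \<Rightarrow> 'k::field) set \<Rightarrow> bool" where
  "admissible V E s t I \<longleftrightarrow> is_ideal V E s t I
     \<and> (\<exists>m\<ge>2. \<forall>p. is_path V E s t p \<and> length (snd p) \<ge> m \<longrightarrow> basis p \<in> I)
     \<and> (\<forall>f\<in>I. \<forall>p. length (snd p) < 2 \<longrightarrow> f p = 0)"

definition special_biserial :: "'v set \<Rightarrow> 'a set \<Rightarrow> ('a \<Rightarrow> 'v) \<Rightarrow> ('a \<Rightarrow> 'v) \<Rightarrow> (('v,'a) qpath \<Rightarrow> 'k::field) set \<Rightarrow> bool" where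
  "special_biserial V E s t I \<longleftrightarrow>
     (\<forall>x\<in>V. card {\<alpha>\<in>E. s \<alpha> = x} \<le> 2 \<and> card {\<alpha>\<in>E. t \<alpha> = x} \<le> 2)
     \<and> (\<forall>\<alpha>\<in>E. (\<forall>\<beta>\<in>E. \<forall>\<beta>'\<in>E. s \<beta> = t \<alpha> \<and> s \<beta>' = t \<alpha> \<and> basis (apath s \<alpha> \<beta>) \<notin> I
                     \<and> basis (apath s \<alpha> \<beta>') \<notin> I \<longrightarrow> \<beta> = \<beta>')
              \<and> (\<forall>\<gamma>\<in>E. \<forall>\<gamma>'\<in>E. t \<gamma> = s \<alpha> \<and> t \<gamma>' = s \<alpha> \<and> basis (apath s \<gamma> \<alpha>) \<notin> I
                     \<and> basis (apath s \<gamma>' \<alpha>) \<notin> I \<longrightarrow> \<gamma> = \<gamma>'))"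

definition simple_cycle :: "'v set \<Rightarrow> 'a set \<Rightarrow> ('a \<Rightarrow> 'v) \<Rightarrow> ('a \<Rightarrow> 'v) \<Rightarrow> 'v \<Rightarrow> ('v,'a) qpath \<Rightarrow> bool" where
  "simple_cycle V E s t x a \<longleftrightarrow> is_path V E s t a \<and> fst a = x \<and> pend t a = x \<and> snd a \<noteq> []
     \<and> (\<forall>i. Suc i < length (snd a) \<longrightarrow> t (snd a ! i) \<noteq> x)"

end

theory Submission
  imports Defs
begin

lemma pend_Nil[simp]: "pend t (x, []) = x" by (simp add: pend_def)
lemma pend_Cons[simp]: "pend t (x, a # L) = pend t (t a, L)" by (simp add: pend_def)
lemma pend_app: "pend t (x, L @ M) = pend t (pend t (x, L), M)"
  by (induction L arbitrary: x) auto


lemma pmult_basis: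
  fixes p q :: "'v \<times> 'a list" and t :: "'a \<Rightarrow> 'v"
  assumes "pend t p = fst q"
  shows "pmult t (basis p) (basis q) = (basis (pcomp p q) :: _ \<Rightarrow> 'k::field)"
proof (rule ext)
  fix w :: "'v \<times> 'a list"
  obtain x ws where w: "w = (x, ws)" by (cases w)
  have key: "\<And>i. i \<in> {0..length ws} \<Longrightarrow>
      ((x, take i ws) = p \<and> (pend t (x, take i ws), drop i ws) = q) \<longleftrightarrow>
      (i = length (snd p) \<and> (x, ws) = pcomp p q)"
  proof -
    fix i assume i: "i \<in> {0..length ws}"
    show "?thesis i"
    proof
      assume h: "(x, take i ws) = p \<and> (pend t (x, take i ws), drop i ws) = q"
      hence "snd p = take i ws" "snd q = drop i ws" "fst p = x" by auto
      thus "i = length (snd p) \<and> (x, ws) = pcomp p q" using i by (auto simp: pcomp_def)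
    next
      assume h: "i = length (snd p) \<and> (x, ws) = pcomp p q"
      hence ws: "ws = snd p @ snd q" "x = fst p" by (auto simp: pcomp_def)
      hence "take i ws = snd p" "drop i ws = snd q" using h by auto
      thus "(x, take i ws) = p \<and> (pend t (x, take i ws), drop i ws) = q"
        using ws assms by auto
    qed
  qed
  have "pmult t (basis p) (basis q) w =
        (\<Sum>i\<in>{0..length ws}. (if i = length (snd p) \<and> (x, ws) = pcomp p q then 1 else 0 :: 'k))"
    unfolding w pmult_def basis_def
    by (auto intro!: sum.cong simp: key[symmetric])
  also have "\<dots> = basis (pcomp p q) w"
  proof (cases "(x, ws) = pcomp p q")
    case True
    hence "length (snd p) \<in> {0..length ws}" by (auto simp: pcomp_def)
    thus ?thesis using True w by (simp add: basis_def)
  next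
    case False
    thus ?thesis using w by (simp add: basis_def)
  qed
  finally show "(pmult t (basis p) (basis q) w :: 'k) = basis (pcomp p q) w" .
qed

lemma pmult_diff_right:
  "pmult t f (\<lambda>w. g w - c * h w) = (\<lambda>w. pmult t f g w - c * pmult t f h w)"
  unfolding pmult_def
  by (auto simp: sum_subtractf sum_distrib_left algebra_simps)

lemma pmult_diff_left:
  "pmult t (\<lambda>w. g w - c * h w) f = (\<lambda>w. pmult t g f w - c * pmult t h f w)"
  unfolding pmult_def
  by (auto simp: sum_subtractf sum_distrib_left algebra_simps)

locale sbq =
  fixes V :: "'v set" and E :: "'a set" and s t :: "'a \<Rightarrow> 'v"
    and I :: "(('v \<times> 'a list) \<Rightarrow> 'k::field) set"
  assumes quiver: "finite_quiver V E s t"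
    and adm: "admissible V E s t I"
    and sb: "special_biserial V E s t I"
begin

abbreviation "path \<equiv> is_path V E s t"

lemma tV: "\<alpha> \<in> E \<Longrightarrow> t \<alpha> \<in> V" and sV: "\<alpha> \<in> E \<Longrightarrow> s \<alpha> \<in> V"
  using quiver by (auto simp: finite_quiver_def)

lemma path_Nil[simp]: "path (x, []) \<longleftrightarrow> x \<in> V"
  by (simp add: is_path_def)

lemma path_Cons[simp]: "path (x, \<alpha> # L) \<longleftrightarrow> x \<in> V \<and> \<alpha> \<in> E \<and> s \<alpha> = x \<and> path (t \<alpha>, L)"
proof
  assume h: "path (x, \<alpha> # L)"
  hence a: "\<alpha> \<in> E" by (simp add: is_path_def)
  have "\<forall>i. Suc i < length L \<longrightarrow> t (L ! i) = s (L ! Suc i)"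
  proof (intro allI impI)
    fix i assume "Suc i < length L"
    thus "t (L ! i) = s (L ! Suc i)" using h unfolding is_path_def
      by (metis Suc_less_eq length_Cons nth_Cons_Suc snd_conv)
  qed
  moreover have "L \<noteq> [] \<longrightarrow> s (hd L) = t \<alpha>"
  proof
    assume "L \<noteq> []"
    hence "Suc 0 < length (\<alpha> # L)" by simp
    with h have "t ((\<alpha> # L) ! 0) = s ((\<alpha> # L) ! Suc 0)" unfolding is_path_def by (metis snd_conv)
    thus "s (hd L) = t \<alpha>" using \<open>L \<noteq> []\<close> by (simp add: hd_conv_nth)
  qed
  ultimately show "x \<in> V \<and> \<alpha> \<in> E \<and> s \<alpha> = x \<and> path (t \<alpha>, L)"
    using h a tV[OF a] unfolding is_path_def by auto
next
  assume h: "x \<in> V \<and> \<alpha> \<in> E \<and> s \<alpha> = x \<and> path (t \<alpha>, L)"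
  have "\<forall>i. Suc i < length (\<alpha> # L) \<longrightarrow> t ((\<alpha> # L) ! i) = s ((\<alpha> # L) ! Suc i)"
  proof (intro allI impI)
    fix i assume i: "Suc i < length (\<alpha> # L)"
    show "t ((\<alpha> # L) ! i) = s ((\<alpha> # L) ! Suc i)"
    proof (cases i)
      case 0
      then show ?thesis using h i unfolding is_path_def by (auto simp: hd_conv_nth)
    next
      case (Suc j)
      then show ?thesis using h i unfolding is_path_def by auto
    qed
  qed
  thus "path (x, \<alpha> # L)" using h unfolding is_path_def by auto
qed

lemma path_fst: "path p \<Longrightarrow> fst p \<in> V" by (simp add: is_path_def)
lemma path_fst': "path (x, M) \<Longrightarrow> x \<in> V" by (simp add: is_path_def)

lemma path_app: "path (x, L @ M) \<longleftrightarrow> path (x, L) \<and> path (pend t (x, L), M)"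
  by (induction L arbitrary: x) (auto dest: path_fst')

lemma path_pend: "path p \<Longrightarrow> pend t p \<in> V"
proof (cases p)
  case (Pair x L)
  assume "path p" thus ?thesis unfolding Pair
    by (induction L arbitrary: x) auto
qed

lemma path_mid: "path (x, P @ \<alpha> # M) \<Longrightarrow> pend t (x, P) = s \<alpha>"
  by (simp add: path_app)

lemma path_set: "path (x, L) \<Longrightarrow> set L \<subseteq> E" by (simp add: is_path_def)
lemma path_nth: "path (x, L) \<Longrightarrow> Suc i < length L \<Longrightarrow> t (L ! i) = s (L ! Suc i)"
  by (simp add: is_path_def)
lemma path_hd: "path (x, L) \<Longrightarrow> L \<noteq> [] \<Longrightarrow> s (hd L) = x"
  by (simp add: is_path_def)

lemma inkQ_basis: "path p \<Longrightarrow> in_kQ V E s t (basis p :: _ \<Rightarrow> 'k)"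
proof -
  assume p: "path p"
  have "{w. (basis p w :: 'k) \<noteq> 0} = {p}" by (auto simp: basis_def)
  thus ?thesis using p unfolding in_kQ_def by (auto simp: basis_def)
qed

lemma ideal: "is_ideal V E s t I" using adm by (simp add: admissible_def)

lemma I_add: "f \<in> I \<Longrightarrow> g \<in> I \<Longrightarrow> (\<lambda>w. f w + g w) \<in> I"
  using ideal by (simp add: is_ideal_def)
lemma I_smult: "f \<in> I \<Longrightarrow> (\<lambda>w. c * f w) \<in> I"
  using ideal by (simp add: is_ideal_def)
lemma I_diff: "f \<in> I \<Longrightarrow> g \<in> I \<Longrightarrow> (\<lambda>w. f w - g w) \<in> I"
proof -
  assume "f \<in> I" "g \<in> I"
  hence "(\<lambda>w. f w + (\<lambda>w. (-1) * g w) w) \<in> I" using I_add I_smult by blast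
  thus ?thesis by simp
qed
lemma I_zero: "(\<lambda>w. 0) \<in> I" using ideal by (simp add: is_ideal_def)
lemma I_multL: "f \<in> I \<Longrightarrow> path p \<Longrightarrow> pmult t (basis p) f \<in> I"
  using ideal inkQ_basis by (simp add: is_ideal_def)
lemma I_multR: "f \<in> I \<Longrightarrow> path p \<Longrightarrow> pmult t f (basis p) \<in> I"
  using ideal inkQ_basis by (simp add: is_ideal_def)

lemma long: "\<exists>m\<ge>2. \<forall>p. path p \<and> length (snd p) \<ge> m \<longrightarrow> basis p \<in> I"
  using adm by (simp add: admissible_def)
lemma short: "f \<in> I \<Longrightarrow> length (snd p) < 2 \<Longrightarrow> f p = 0"
  using adm by (cases p) (simp add: admissible_def)

lemma sub_I:
  assumes "basis (pend t (x, P), M) \<in> I" "path (x, P @ M @ S)"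
  shows "basis (x, P @ M @ S) \<in> I"
proof -
  have p1: "path (x, P)" and p2: "path (pend t (x, P), M)"
    and p3: "path (pend t (x, P @ M), S)"
    using assms(2) path_app[of x P "M @ S"] path_app[of "pend t (x, P)" M S]
    by (auto simp: pend_app)
  have "pmult t (basis (x, P)) (basis (pend t (x, P), M)) \<in> I" using I_multL assms(1) p1 by blast
  moreover have "pmult t (basis (x, P)) (basis (pend t (x, P), M)) = (basis (x, P @ M) :: _ \<Rightarrow> 'k)"
    by (subst pmult_basis) (auto simp: pcomp_def)
  ultimately have "basis (x, P @ M) \<in> I" by simp
  hence "pmult t (basis (x, P @ M)) (basis (pend t (x, P @ M), S)) \<in> I" using I_multR p3 by blast
  moreover have "pmult t (basis (x, P @ M)) (basis (pend t (x, P @ M), S)) = (basis (x, P @ M @ S) :: _ \<Rightarrow> 'k)"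
    by (subst pmult_basis) (auto simp: pcomp_def)
  ultimately show ?thesis by simp
qed

lemma sub_notI:
  "basis (x, P @ M @ S) \<notin> I \<Longrightarrow> path (x, P @ M @ S) \<Longrightarrow> basis (pend t (x, P), M) \<notin> I"
  using sub_I by blast

lemma pair_notI:
  assumes "path (x, L)" "basis (x, L) \<notin> I" "Suc i < length L"
  shows "basis (apath s (L ! i) (L ! Suc i)) \<notin> I"
proof -
  have L: "L = take i L @ [L ! i, L ! Suc i] @ drop (Suc (Suc i)) L"
    using assms(3) by (simp add: Cons_nth_drop_Suc)
  have "pend t (x, take i L) = s (L ! i)"
    using assms(1) L path_mid[of x "take i L" "L ! i"] by (metis append_Cons)
  moreover have "basis (pend t (x, take i L), [L ! i, L ! Suc i]) \<notin> I"
    using sub_notI[of x "take i L" "[L ! i, L ! Suc i]" "drop (Suc (Suc i)) L"] assms L by metis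
  ultimately show ?thesis by (simp add: apath_def)
qed

lemma sb_succ:
  "\<alpha> \<in> E \<Longrightarrow> \<beta> \<in> E \<Longrightarrow> \<beta>' \<in> E \<Longrightarrow> s \<beta> = t \<alpha> \<Longrightarrow> s \<beta>' = t \<alpha> \<Longrightarrow>
   basis (apath s \<alpha> \<beta>) \<notin> I \<Longrightarrow> basis (apath s \<alpha> \<beta>') \<notin> I \<Longrightarrow> \<beta> = \<beta>'"
  using sb unfolding special_biserial_def by blast

lemma sb_pred:
  "\<alpha> \<in> E \<Longrightarrow> \<gamma> \<in> E \<Longrightarrow> \<gamma>' \<in> E \<Longrightarrow> t \<gamma> = s \<alpha> \<Longrightarrow> t \<gamma>' = s \<alpha> \<Longrightarrow>
   basis (apath s \<gamma> \<alpha>) \<notin> I \<Longrightarrow> basis (apath s \<gamma>' \<alpha>) \<notin> I \<Longrightarrow> \<gamma> = \<gamma>'"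
  using sb unfolding special_biserial_def by blast

lemma out2:
  assumes "x \<in> V" "\<alpha> \<in> E" "\<beta> \<in> E" "\<gamma> \<in> E" "s \<alpha> = x" "s \<beta> = x" "s \<gamma> = x" "\<alpha> \<noteq> \<beta>"
  shows "\<gamma> = \<alpha> \<or> \<gamma> = \<beta>"
proof (rule ccontr)
  assume "\<not> ?thesis"
  hence "{\<alpha>, \<beta>, \<gamma>} \<subseteq> {\<epsilon>\<in>E. s \<epsilon> = x}" "card {\<alpha>, \<beta>, \<gamma>} = 3" using assms by auto
  moreover have "finite {\<epsilon>\<in>E. s \<epsilon> = x}" using quiver by (simp add: finite_quiver_def)
  ultimately have "3 \<le> card {\<epsilon>\<in>E. s \<epsilon> = x}" by (metis card_mono)
  moreover have "card {\<epsilon>\<in>E. s \<epsilon> = x} \<le> 2" using sb assms(1) by (simp add: special_biserial_def)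
  ultimately show False by simp
qed


lemma geo:
  assumes q: "path (x, Q)" and w: "path (pend t (x, Q), W)"
    and cyc: "pend t (pend t (x, Q), W) = pend t (x, Q)" and ne: "W \<noteq> []"
    and rel: "(\<lambda>z. basis (x, Q) z - c * basis (x, Q @ W) z) \<in> I"
  shows "basis (x, Q) \<in> I"
proof -
  define y where "y = pend t (x, Q)"
  define R where "R k = concat (replicate k W)" for k
  have Rp: "path (y, R k) \<and> pend t (y, R k) = y" for k
  proof (induction k)
    case 0
    then show ?case using path_pend[OF q] by (simp add: R_def y_def)
  next
    case (Suc k)
    have "R (Suc k) = W @ R k" by (simp add: R_def)
    then show ?case using Suc w cyc by (simp add: path_app pend_app y_def)
  qed
  have H: "(\<lambda>z. basis (x, Q) z - c ^ k * basis (x, Q @ R k) z) \<in> I" for k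
  proof (induction k)
    case 0
    have "(\<lambda>z. basis (x, Q) z - c ^ 0 * basis (x, Q @ R 0) z) = (\<lambda>z. 0 :: 'k)"
      by (simp add: R_def)
    then show ?case using I_zero by simp
  next
    case (Suc k)
    have g: "pmult t (\<lambda>z. basis (x, Q) z - c * basis (x, Q @ W) z) (basis (y, R k)) \<in> I"
      using I_multR[OF rel] Rp by blast
    have e1: "pmult t (basis (x, Q)) (basis (y, R k)) = (basis (x, Q @ R k) :: _ \<Rightarrow> 'k)"
      by (subst pmult_basis) (auto simp: pcomp_def y_def)
    have e2: "pmult t (basis (x, Q @ W)) (basis (y, R k)) = (basis (x, Q @ R (Suc k)) :: _ \<Rightarrow> 'k)"
      by (subst pmult_basis) (auto simp: pcomp_def y_def pend_app cyc R_def)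
    have g': "(\<lambda>z. basis (x, Q @ R k) z - c * basis (x, Q @ R (Suc k)) z) \<in> I"
      using g unfolding pmult_diff_left e1 e2 .
    have "(\<lambda>z. (\<lambda>z. basis (x, Q) z - c ^ k * basis (x, Q @ R k) z) z +
              (\<lambda>z. c ^ k * (basis (x, Q @ R k) z - c * basis (x, Q @ R (Suc k)) z)) z) \<in> I"
      using I_add[OF Suc I_smult[OF g']] by simp
    moreover have "(\<lambda>z. (\<lambda>z. basis (x, Q) z - c ^ k * basis (x, Q @ R k) z) z +
              (\<lambda>z. c ^ k * (basis (x, Q @ R k) z - c * basis (x, Q @ R (Suc k)) z)) z)
        = (\<lambda>z. basis (x, Q) z - c ^ Suc k * basis (x, Q @ R (Suc k)) z)"
      by (auto simp: algebra_simps)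
    ultimately show ?case by simp
  qed
  obtain m where m: "m \<ge> 2" "\<forall>p. path p \<and> length (snd p) \<ge> m \<longrightarrow> basis p \<in> I"
    using long by blast
  have "path (x, Q @ R m)" using q Rp by (simp add: path_app y_def)
  moreover have "length (R m) \<ge> m"
  proof -
    have "length (R m) = m * length W" by (simp add: R_def length_concat sum_list_replicate)
    thus ?thesis using ne by (simp add: Suc_leI)
  qed
  ultimately have B: "basis (x, Q @ R m) \<in> I" using m(2) by force
  have "(\<lambda>z. (\<lambda>z. basis (x, Q) z - c ^ m * basis (x, Q @ R m) z) z +
             (\<lambda>z. c ^ m * basis (x, Q @ R m) z) z) \<in> I"
    using I_add[OF H[of m] I_smult[OF B, of "c ^ m"]] by simp
  thus ?thesis by simp
qed

lemma prefix_nth: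
  assumes "path (x, L)" "path (x, M)" "basis (x, L) \<notin> I" "basis (x, M) \<notin> I"
    "L \<noteq> []" "M \<noteq> []" "hd L = hd M"
  shows "i < min (length L) (length M) \<Longrightarrow> L ! i = M ! i"
proof (induction i)
  case 0
  then show ?case using assms by (simp add: hd_conv_nth)
next
  case (Suc i)
  hence IH: "L ! i = M ! i" by simp
  have "basis (apath s (L ! i) (L ! Suc i)) \<notin> I" using pair_notI[of x L i] assms(1,3) Suc.prems by simp
  moreover have "basis (apath s (M ! i) (M ! Suc i)) \<notin> I"
    using pair_notI[of x M i] assms Suc.prems by simp
  moreover have "t (L ! i) = s (L ! Suc i)" "t (M ! i) = s (M ! Suc i)"
    using path_nth[of x L i] path_nth[of x M i] assms(1,2) Suc.prems by auto
  moreover have sL: "set L \<subseteq> E" and sM: "set M \<subseteq> E" using path_set assms(1,2) by auto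
  have "L ! i \<in> E" "L ! Suc i \<in> E" "M ! Suc i \<in> E"
    using sL sM Suc.prems by (meson Suc_lessD min_less_iff_conj nth_mem subsetD)+
  moreover note calculation
  ultimately show ?case using sb_succ[of "L ! i" "L ! Suc i" "M ! Suc i"] IH by auto
qed

lemma prefix2:
  assumes "path (x, L)" "path (x, M)" "basis (x, L) \<notin> I" "basis (x, M) \<notin> I"
    "L \<noteq> []" "M \<noteq> []" "hd L = hd M"
  shows "(\<exists>R. L = M @ R) \<or> (\<exists>R. M = L @ R)"
proof (cases "length L \<le> length M")
  case True
  have "take (length L) M = L"
    by (rule nth_equalityI) (use True prefix_nth[OF assms] in auto)
  hence "M = L @ drop (length L) M" by (metis append_take_drop_id)
  thus ?thesis by blast
next
  case False
  have "take (length M) L = M"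
    by (rule nth_equalityI) (use False prefix_nth[OF assms] in auto)
  hence "L = M @ drop (length M) L" by (metis append_take_drop_id)
  thus ?thesis by blast
qed

lemma sc_facts:
  assumes "simple_cycle V E s t x (x, A)"
  shows "A \<noteq> []" "path (x, A)" "pend t (x, A) = x" "\<And>i. Suc i < length A \<Longrightarrow> t (A ! i) \<noteq> x"
  using assms by (auto simp: simple_cycle_def)

lemma sc_take_pend:
  assumes "simple_cycle V E s t x (x, A)" "0 < k" "k < length A"
  shows "pend t (x, take k A) \<noteq> x"
proof -
  have "take k A \<noteq> []" using assms by (cases A) auto
  hence "pend t (x, take k A) = t (A ! (k - 1))"
    using assms by (simp add: pend_def last_conv_nth min_def)
  thus ?thesis using sc_facts(4)[OF assms(1), of "k - 1"] assms by simp
qed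

lemma sc_s_nth:
  assumes "simple_cycle V E s t x (x, A)" "0 < i" "i < length A"
  shows "s (A ! i) \<noteq> x"
proof -
  have "t (A ! (i - 1)) = s (A ! i)" using path_nth[OF sc_facts(2)[OF assms(1)], of "i - 1"] assms by simp
  thus ?thesis using sc_facts(4)[OF assms(1), of "i - 1"] assms by simp
qed

lemma split_tail:
  assumes "path (x, A @ R)" "basis (x, A @ R) \<notin> I" "pend t (x, A) = x" "A \<noteq> []" "R \<noteq> []"
  shows "path (x, R)" "basis (x, R) \<notin> I" "hd R \<in> E" "s (hd R) = x"
    "basis (apath s (last A) (hd R)) \<notin> I"
proof -
  show pR: "path (x, R)" using assms(1,3) by (simp add: path_app)
  show "basis (x, R) \<notin> I" using sub_notI[of x A R "[]"] assms by simp
  show "hd R \<in> E" using path_set[OF pR] assms(5) by (meson hd_in_set subsetD)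
  show "s (hd R) = x" using path_hd[OF pR assms(5)] .
  have "(A @ R) ! (length A - 1) = last A" "(A @ R) ! Suc (length A - 1) = hd R"
    using assms(4,5) by (auto simp: nth_append last_conv_nth hd_conv_nth)
  moreover have "Suc (length A - 1) < length (A @ R)" using assms(4,5) by simp
  ultimately show "basis (apath s (last A) (hd R)) \<notin> I"
    using pair_notI[OF assms(1,2), of "length A - 1"] by simp
qed

lemma blk_step:
  assumes sc: "simple_cycle V E s t x (x, A)" and na: "basis (x, A) \<notin> I"
    and w: "path (x, L)" "basis (x, L) \<notin> I" "L \<noteq> []" "hd L = hd A" "pend t (x, L) = x"
  shows "\<exists>R. L = A @ R"
proof -
  note f = sc_facts[OF sc]
  from prefix2[OF w(1) f(2) w(2) na w(3) f(1) w(4)]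
  show ?thesis
  proof
    assume "\<exists>R. L = A @ R" thus ?thesis .
  next
    assume "\<exists>R. A = L @ R"
    then obtain R where R: "A = L @ R" by blast
    show ?thesis
    proof (cases "R = []")
      case True thus ?thesis using R by auto
    next
      case False
      hence "take (length L) A = L" "0 < length L" "length L < length A" using R w(3) by auto
      thus ?thesis using sc_take_pend[OF sc] w(5) by metis
    qed
  qed
qed

fun alt :: "'b list \<Rightarrow> 'b list \<Rightarrow> nat \<Rightarrow> 'b list" where
  "alt X Y 0 = []"
| "alt X Y (Suc n) = X @ alt Y X n"

lemma alt_prefix: "\<exists>R. alt X Y (n + k) = alt X Y n @ R"
  by (induction n arbitrary: X Y) auto

lemma alt_even: "alt X Y (2 * m) = concat (replicate m (X @ Y))"
  by (induction m) auto

lemma alt_odd: "alt X Y (Suc (2 * m)) = concat (replicate m (X @ Y)) @ X"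
  by (induction m) auto

lemma alt_decomp:
  assumes sca: "simple_cycle V E s t x (x, A)" and na: "basis (x, A) \<notin> I"
    and scb: "simple_cycle V E s t x (x, B)" and nb: "basis (x, B) \<notin> I"
    and H1: "\<forall>\<gamma>\<in>E. s \<gamma> = x \<and> basis (apath s (last A) \<gamma>) \<notin> I \<longrightarrow> \<gamma> = hd B"
    and H2: "\<forall>\<gamma>\<in>E. s \<gamma> = x \<and> basis (apath s (last B) \<gamma>) \<notin> I \<longrightarrow> \<gamma> = hd A"
  shows "path (x, L) \<Longrightarrow> basis (x, L) \<notin> I \<Longrightarrow> L \<noteq> [] \<Longrightarrow> pend t (x, L) = x \<Longrightarrow>
    (hd L = hd A \<longrightarrow> (\<exists>N. L = alt A B N)) \<and> (hd L = hd B \<longrightarrow> (\<exists>N. L = alt B A N))"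
proof (induction "length L" arbitrary: L rule: less_induct)
  case less
  note fa = sc_facts[OF sca] and fb = sc_facts[OF scb]
  show ?case
  proof (intro conjI impI)
    assume h: "hd L = hd A"
    obtain R where R: "L = A @ R" using blk_step[OF sca na less.prems(1,2,3) h less.prems(4)] by blast
    show "\<exists>N. L = alt A B N"
    proof (cases "R = []")
      case True thus ?thesis using R by (intro exI[of _ 1]) simp
    next
      case False
      note st = split_tail[of x A R, folded R, OF less.prems(1,2) fa(3) fa(1) False]
      have "pend t (x, R) = x" using less.prems(4) R fa(3) by (simp add: pend_app)
      moreover have "hd R = hd B" using H1 st by blast
      moreover have "length R < length L" using R fa(1) by simp
      ultimately obtain N where "R = alt B A N" using less.hyps st False by blast
      thus ?thesis using R by (intro exI[of _ "Suc N"]) simp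
    qed
  next
    assume h: "hd L = hd B"
    obtain R where R: "L = B @ R" using blk_step[OF scb nb less.prems(1,2,3) h less.prems(4)] by blast
    show "\<exists>N. L = alt B A N"
    proof (cases "R = []")
      case True thus ?thesis using R by (intro exI[of _ 1]) simp
    next
      case False
      note st = split_tail[of x B R, folded R, OF less.prems(1,2) fb(3) fb(1) False]
      have "pend t (x, R) = x" using less.prems(4) R fb(3) by (simp add: pend_app)
      moreover have "hd R = hd A" using H2 st by blast
      moreover have "length R < length L" using R fb(1) by simp
      ultimately obtain N where "R = alt A B N" using less.hyps st False by blast
      thus ?thesis using R by (intro exI[of _ "Suc N"]) simp
    qed
  qed
qed

lemma per_decomp:
  assumes sca: "simple_cycle V E s t x (x, A)" and na: "basis (x, A) \<notin> I"
    and H: "\<forall>\<gamma>\<in>E. s \<gamma> = x \<and> basis (apath s (last A) \<gamma>) \<notin> I \<longrightarrow> \<gamma> = hd A"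
  shows "path (x, L) \<Longrightarrow> basis (x, L) \<notin> I \<Longrightarrow> L \<noteq> [] \<Longrightarrow> hd L = hd A \<Longrightarrow>
    \<exists>n k. k < length A \<and> L = concat (replicate n A) @ take k A"
proof (induction "length L" arbitrary: L rule: less_induct)
  case less
  note fa = sc_facts[OF sca]
  from prefix2[OF less.prems(1) fa(2) less.prems(2) na less.prems(3) fa(1) less.prems(4)]
  show ?case
  proof
    assume "\<exists>R. L = A @ R"
    then obtain R where R: "L = A @ R" by blast
    show ?thesis
    proof (cases "R = []")
      case True thus ?thesis using R fa(1) by (intro exI[of _ 1] exI[of _ 0]) simp
    next
      case False
      note st = split_tail[of x A R, folded R, OF less.prems(1,2) fa(3) fa(1) False]
      have "hd R = hd A" using H st by blast
      moreover have "length R < length L" using R fa(1) by simp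
      ultimately obtain n k where "k < length A" "R = concat (replicate n A) @ take k A"
        using less.hyps st False by blast
      thus ?thesis using R by (intro exI[of _ "Suc n"] exI[of _ k]) simp
    qed
  next
    assume "\<exists>R. A = L @ R"
    then obtain R where R: "A = L @ R" by blast
    show ?thesis
    proof (cases "R = []")
      case True thus ?thesis using R fa(1) by (intro exI[of _ 1] exI[of _ 0]) simp
    next
      case False
      thus ?thesis using R by (intro exI[of _ 0] exI[of _ "length L"]) simp
    qed
  qed
qed

lemma pend_rep: "pend t (x, A) = x \<Longrightarrow> pend t (x, concat (replicate n A)) = x"
  by (induction n) (auto simp: pend_app)

lemma no_enter:
  assumes sca: "simple_cycle V E s t x (x, A)" and na: "basis (x, A) \<notin> I"
    and L: "path (z, L)" "basis (z, L) \<notin> I" "L \<noteq> []" "hd L \<notin> set A"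
    and Hyp: "\<forall>j. 0 < j \<and> j < length L \<and> L ! j = hd A \<longrightarrow> L ! (j - 1) \<in> set A"
  shows "set L \<inter> set A = {}"
proof (rule ccontr)
  assume "set L \<inter> set A \<noteq> {}"
  then obtain \<delta> where d: "\<delta> \<in> set L" "\<delta> \<in> set A" by blast
  then obtain j0 where j0: "j0 < length L" "L ! j0 = \<delta>" by (meson in_set_conv_nth)
  define j where "j = (LEAST j. j < length L \<and> L ! j \<in> set A)"
  have jj: "j < length L \<and> L ! j \<in> set A" unfolding j_def
    by (rule LeastI[of _ j0]) (use j0 d in simp)
  hence j: "j < length L" "L ! j \<in> set A" by auto
  have min0: "\<And>j'. j' < j \<Longrightarrow> \<not> (j' < length L \<and> L ! j' \<in> set A)"
    unfolding j_def by (rule not_less_Least)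
  have min: "\<And>j'. j' < j \<Longrightarrow> L ! (j') \<notin> set A"
  proof -
    fix j' assume "j' < j"
    thus "L ! j' \<notin> set A" using min0[of j'] j(1) by simp
  qed
  have j0': "j \<noteq> 0"
  proof
    assume "j = 0" thus False using j(2) L(3,4) by (simp add: hd_conv_nth)
  qed
  obtain i where i: "i < length A" "A ! i = L ! j" using j(2) by (meson in_set_conv_nth)
  show False
  proof (cases "i = 0")
    case True
    hence "L ! j = hd A" using i sc_facts(1)[OF sca] by (simp add: hd_conv_nth)
    hence "L ! (j - 1) \<in> set A" using Hyp j j0' by blast
    thus False using min[of "j - 1"] j0' by simp
  next
    case False
    have pa: "basis (apath s (A ! (i - 1)) (A ! Suc (i - 1))) \<notin> I"
      using pair_notI[OF sc_facts(2)[OF sca] na, of "i - 1"] i False by simp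
    have pl: "basis (apath s (L ! (j - 1)) (L ! Suc (j - 1))) \<notin> I"
      using pair_notI[OF L(1,2), of "j - 1"] j j0' by simp
    have e1: "t (A ! (i - 1)) = s (A ! Suc (i - 1))"
      using path_nth[OF sc_facts(2)[OF sca], of "i - 1"] i False by simp
    have e2: "t (L ! (j - 1)) = s (L ! Suc (j - 1))"
      using path_nth[OF L(1), of "j - 1"] j j0' by simp
    have sA: "set A \<subseteq> E" using path_set[OF sc_facts(2)[OF sca]] .
    have sL: "set L \<subseteq> E" using path_set[OF L(1)] .
    have m1: "A ! (i - 1) \<in> E" "A ! i \<in> E" using sA i(1) by (meson less_imp_diff_less nth_mem subsetD)+
    have m2: "L ! (j - 1) \<in> E" using sL j by auto
    have "Suc (i - 1) = i" "Suc (j - 1) = j" using False j0' by auto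
    hence "L ! (j - 1) = A ! (i - 1)"
      using sb_pred[of "A ! i" "L ! (j - 1)" "A ! (i - 1)"] pa pl e1 e2 m1 m2 i by auto
    moreover have "A ! (i - 1) \<in> set A" using i by auto
    ultimately show False using min[of "j - 1"] j0' by simp
  qed
qed


lemma sc_hd_notin:
  assumes sca: "simple_cycle V E s t x (x, A)" and "s \<beta> = x" "\<beta> \<noteq> hd A"
  shows "\<beta> \<notin> set A"
proof
  assume "\<beta> \<in> set A"
  then obtain i where i: "i < length A" "A ! i = \<beta>" by (meson in_set_conv_nth)
  show False
  proof (cases "i = 0")
    case True thus False using i assms sc_facts(1)[OF sca] by (simp add: hd_conv_nth)
  next
    case False thus False using sc_s_nth[OF sca, of i] i assms by simp
  qed
qed

lemma sc_last:
  assumes sca: "simple_cycle V E s t x (x, A)"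
  shows "last A \<in> E" "t (last A) = x" "hd A \<in> E" "s (hd A) = x" "last A \<in> set A" "hd A \<in> set A"
    "pend t (x, butlast A) = s (last A)"
proof -
  note f = sc_facts[OF sca]
  show "last A \<in> E" "hd A \<in> E" using path_set[OF f(2)] f(1) by (meson last_in_set hd_in_set subsetD)+
  show "t (last A) = x" using f(1,3) by (simp add: pend_def)
  show "s (hd A) = x" using path_hd[OF f(2) f(1)] .
  show "last A \<in> set A" "hd A \<in> set A" using f(1) by auto
  have "path (x, butlast A @ last A # [])" using f(1,2) by simp
  thus "pend t (x, butlast A) = s (last A)" using path_mid by blast
qed

end


locale rel = sbq V E s t I for V :: "'v set" and E :: "'a set" and s t :: "'a \<Rightarrow> 'v"
    and I :: "(('v \<times> 'a list) \<Rightarrow> 'k::field) set" +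
  fixes U Vs :: "'a list" and x y :: 'v and lam :: 'k
  assumes u_path: "is_path V E s t (x, U)" and v_path: "is_path V E s t (x, Vs)"
    and u_end: "pend t (x, U) = y" and v_end: "pend t (x, Vs) = y"
    and uv: "U \<noteq> Vs"
    and u_notin: "basis (x, U) \<notin> I" and v_notin: "basis (x, Vs) \<notin> I"
    and lam: "lam \<noteq> 0"
    and rel: "(\<lambda>w. basis (x, U) w - lam * basis (x, Vs) w) \<in> I"
begin

lemma U_ne: "U \<noteq> []"
proof
  assume "U = []"
  hence "(\<lambda>w. basis (x, U) w - lam * basis (x, Vs) w) (x, U) = 0" using short[OF rel] by simp
  thus False using uv by (simp add: basis_def)
qed

lemma Vs_ne: "Vs \<noteq> []"
proof
  assume "Vs = []"
  hence "(\<lambda>w. basis (x, U) w - lam * basis (x, Vs) w) (x, Vs) = 0" using short[OF rel] by simp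
  thus False using uv lam by (simp add: basis_def)
qed

lemma stepA: "hd U \<noteq> hd Vs"
proof
  assume h: "hd U = hd Vs"
  have pu: "path (x, U)" and pv: "path (x, Vs)" using u_path v_path by auto
  have nu: "basis (x, U) \<notin> I" and nv: "basis (x, Vs) \<notin> I" using u_notin v_notin by auto
  from prefix2[OF pu pv nu nv U_ne Vs_ne h]
  show False
  proof
    assume "\<exists>R. U = Vs @ R"
    then obtain R where R: "U = Vs @ R" by blast
    have Rne: "R \<noteq> []" using R uv by auto
    have "(\<lambda>w. (- 1 / lam) * (\<lambda>w. basis (x, U) w - lam * basis (x, Vs) w) w) \<in> I" using I_smult[OF rel] .
    moreover have "(\<lambda>w. (- 1 / lam) * (\<lambda>w. basis (x, U) w - lam * basis (x, Vs) w) w)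
        = (\<lambda>w. basis (x, Vs) w - (1 / lam) * basis (x, Vs @ R) w)"
      using lam by (intro ext) (simp add: R field_simps)
    ultimately have r: "(\<lambda>w. basis (x, Vs) w - (1 / lam) * basis (x, Vs @ R) w) \<in> I" by simp
    have p2: "path (pend t (x, Vs), R)" using pu R by (simp add: path_app)
    have cy: "pend t (pend t (x, Vs), R) = pend t (x, Vs)"
      using u_end v_end R by (simp add: pend_app)
    show False using geo[OF pv p2 cy Rne r] nv by simp
  next
    assume "\<exists>R. Vs = U @ R"
    then obtain R where R: "Vs = U @ R" by blast
    have Rne: "R \<noteq> []" using R uv by auto
    have r: "(\<lambda>w. basis (x, U) w - lam * basis (x, U @ R) w) \<in> I"
      using rel by (simp add: R)
    have p2: "path (pend t (x, U), R)" using pv R by (simp add: path_app)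
    have cy: "pend t (pend t (x, U), R) = pend t (x, U)"
      using u_end v_end R by (simp add: pend_app)
    show False using geo[OF pu p2 cy Rne r] nu by simp
  qed
qed

lemma stepB:
  assumes g: "\<gamma> \<in> E" "t \<gamma> = x"
  shows "basis (s \<gamma>, \<gamma> # U) \<in> I" "basis (s \<gamma>, \<gamma> # Vs) \<in> I"
proof -
  have pu: "path (x, U)" and pv: "path (x, Vs)" using u_path v_path by auto
  have xV: "x \<in> V" using tV[OF g(1)] g(2) by simp
  have pg: "path (s \<gamma>, [\<gamma>])" using g sV xV by simp
  have pgu: "path (s \<gamma>, \<gamma> # U)" and pgv: "path (s \<gamma>, \<gamma> # Vs)" using g sV pu pv by auto
  have e1: "pmult t (basis (s \<gamma>, [\<gamma>])) (basis (x, U)) = (basis (s \<gamma>, \<gamma> # U) :: _ \<Rightarrow> 'k)"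
    by (subst pmult_basis) (auto simp: g pcomp_def)
  have e2: "pmult t (basis (s \<gamma>, [\<gamma>])) (basis (x, Vs)) = (basis (s \<gamma>, \<gamma> # Vs) :: _ \<Rightarrow> 'k)"
    by (subst pmult_basis) (auto simp: g pcomp_def)
  have r: "(\<lambda>w. basis (s \<gamma>, \<gamma> # U) w - lam * basis (s \<gamma>, \<gamma> # Vs) w) \<in> I"
    using I_multL[OF rel pg] unfolding pmult_diff_right e1 e2 .
  have both: "basis (s \<gamma>, \<gamma> # U) \<notin> I \<Longrightarrow> basis (s \<gamma>, \<gamma> # Vs) \<notin> I \<Longrightarrow> False"
  proof -
    assume a1: "basis (s \<gamma>, \<gamma> # U) \<notin> I" and a2: "basis (s \<gamma>, \<gamma> # Vs) \<notin> I"
    have "basis (apath s ((\<gamma> # U) ! 0) ((\<gamma> # U) ! Suc 0)) \<notin> I"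
      using pair_notI[OF pgu a1, of 0] U_ne by simp
    hence q1: "basis (apath s \<gamma> (hd U)) \<notin> I" using U_ne by (simp add: hd_conv_nth)
    have "basis (apath s ((\<gamma> # Vs) ! 0) ((\<gamma> # Vs) ! Suc 0)) \<notin> I"
      using pair_notI[OF pgv a2, of 0] Vs_ne by simp
    hence q2: "basis (apath s \<gamma> (hd Vs)) \<notin> I" using Vs_ne by (simp add: hd_conv_nth)
    have "hd U \<in> E" "hd Vs \<in> E" using path_set[OF pu] path_set[OF pv] U_ne Vs_ne
      by (meson hd_in_set subsetD)+
    moreover have "s (hd U) = t \<gamma>" "s (hd Vs) = t \<gamma>" using path_hd[OF pu U_ne] path_hd[OF pv Vs_ne] g by auto
    ultimately have "hd U = hd Vs" using sb_succ[OF g(1) _ _ _ _ q1 q2] by blast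
    thus False using stepA by simp
  qed
  show "basis (s \<gamma>, \<gamma> # U) \<in> I"
  proof (rule ccontr)
    assume a1: "basis (s \<gamma>, \<gamma> # U) \<notin> I"
    have "basis (s \<gamma>, \<gamma> # Vs) \<notin> I"
    proof
      assume "basis (s \<gamma>, \<gamma> # Vs) \<in> I"
      hence "(\<lambda>w. (\<lambda>w. basis (s \<gamma>, \<gamma> # U) w - lam * basis (s \<gamma>, \<gamma> # Vs) w) w
               + (\<lambda>w. lam * basis (s \<gamma>, \<gamma> # Vs) w) w) \<in> I"
        using I_add[OF r I_smult] by blast
      thus False using a1 by simp
    qed
    thus False using both a1 by blast
  qed
  show "basis (s \<gamma>, \<gamma> # Vs) \<in> I"
  proof (rule ccontr)
    assume a2: "basis (s \<gamma>, \<gamma> # Vs) \<notin> I"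
    have "basis (s \<gamma>, \<gamma> # U) \<notin> I"
    proof
      assume "basis (s \<gamma>, \<gamma> # U) \<in> I"
      hence "(\<lambda>w. (- 1 / lam) * (\<lambda>w. (\<lambda>w. basis (s \<gamma>, \<gamma> # U) w - lam * basis (s \<gamma>, \<gamma> # Vs) w) w
               - basis (s \<gamma>, \<gamma> # U) w) w) \<in> I"
        using I_smult[OF I_diff[OF r]] by blast
      thus False using a2 lam by (simp add: field_simps)
    qed
    thus False using both a2 by blast
  qed
qed



lemma noA_V:
  assumes sca: "simple_cycle V E s t x (x, A)"
  shows "U \<noteq> A @ Vs @ R"
proof
  assume UA: "U = A @ Vs @ R"
  note fa = sc_facts[OF sca] and la = sc_last[OF sca]
  have eq: "U = butlast A @ (last A # Vs) @ R" using UA fa(1) by simp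
  have "basis (s (last A), last A # Vs) \<in> I" using stepB(2)[OF la(1) la(2)] .
  hence "basis (x, butlast A @ (last A # Vs) @ R) \<in> I"
    using sub_I[of x "butlast A" "last A # Vs" R] u_path eq la(7) by simp
  thus False using u_notin eq by simp
qed

lemma noB_U:
  assumes scb: "simple_cycle V E s t x (x, B)"
  shows "Vs \<noteq> B @ U @ R"
proof
  assume VB: "Vs = B @ U @ R"
  note fb = sc_facts[OF scb] and lb = sc_last[OF scb]
  have eq: "Vs = butlast B @ (last B # U) @ R" using VB fb(1) by simp
  have "basis (s (last B), last B # U) \<in> I" using stepB(1)[OF lb(1) lb(2)] .
  hence "basis (x, butlast B @ (last B # U) @ R) \<in> I"
    using sub_I[of x "butlast B" "last B # U" R] v_path eq lb(7) by simp
  thus False using v_notin eq by simp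
qed

lemma part_a:
  assumes sca: "simple_cycle V E s t x (x, A)" and UA: "U = A @ P0" and xy: "x \<noteq> y"
  shows "(set U \<inter> set Vs \<noteq> {} \<longrightarrow> (\<exists>P B. path (x, P) \<and> pend t (x, P) = y \<and> path (y, B)
            \<and> pend t (y, B) = y \<and> B \<noteq> [] \<and> U = A @ P \<and> Vs = P @ B))
       \<and> (set U \<inter> set Vs = {} \<longrightarrow> (\<exists>n k. 0 < k \<and> k < length A \<and> 1 \<le> n
            \<and> U = concat (replicate n A) @ take k A))"
proof -
  note fa = sc_facts[OF sca] and la = sc_last[OF sca]
  have pu: "path (x, A @ P0)" using u_path UA by simp
  have nu: "basis (x, A @ P0) \<notin> I" using u_notin UA by simp
  have pv: "path (x, Vs)" using v_path .
  have na: "basis (x, A) \<notin> I"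
  proof
    assume "basis (x, A) \<in> I"
    hence "basis (x, [] @ A @ P0) \<in> I" using sub_I[of x "[]" A P0] pu by simp
    thus False using nu by simp
  qed
  have P0ne: "P0 \<noteq> []"
  proof
    assume "P0 = []"
    hence "pend t (x, U) = x" using UA fa(3) by simp
    thus False using u_end xy by simp
  qed
  note st = split_tail[OF pu nu fa(3) fa(1) P0ne]
  have xV: "x \<in> V" using path_fst'[OF pv] .
  have hdU: "hd U = hd A" using UA fa(1) by simp
  have b1: "hd Vs \<in> E" "s (hd Vs) = x" using path_set[OF pv] Vs_ne path_hd[OF pv Vs_ne]
    by (auto intro: hd_in_set)
  have ab: "hd A \<noteq> hd Vs" using stepA hdU by simp
  have b1notA: "hd Vs \<notin> set A" using sc_hd_notin[OF sca b1(2)] ab by simp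
  have o: "hd P0 = hd A \<or> hd P0 = hd Vs" using out2[OF xV la(3) b1(1) st(3) la(4) b1(2) st(4) ab] .
  have pend0: "pend t (x, P0) = y" using u_end UA fa(3) by (simp add: pend_app)
  show ?thesis
  proof (cases "hd P0 = hd Vs")
    case True
    have nopre: "\<not> (\<exists>R. P0 = Vs @ R)"
    proof
      assume "\<exists>R. P0 = Vs @ R"
      then obtain R where R: "P0 = Vs @ R" by blast
      have eq: "A @ P0 = butlast A @ (last A # Vs) @ R" using R fa(1) by simp
      have "basis (s (last A), last A # Vs) \<in> I" using stepB(2)[OF la(1) la(2)] .
      hence "basis (x, butlast A @ (last A # Vs) @ R) \<in> I"
        using sub_I[of x "butlast A" "last A # Vs" R] pu eq la(7) by simp
      thus False using nu eq by simp
    qed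
    obtain R where R: "Vs = P0 @ R"
      using prefix2[OF st(1) pv st(2) v_notin P0ne Vs_ne True] nopre by blast
    have Rne: "R \<noteq> []" using R nopre by auto
    have pR: "path (y, R)" using pv R pend0 by (simp add: path_app)
    have eR: "pend t (y, R) = y" using v_end R pend0 by (simp add: pend_app)
    have "hd Vs \<in> set U" using UA True P0ne by (metis Un_iff hd_in_set set_append)
    hence "set U \<inter> set Vs \<noteq> {}" using Vs_ne by auto
    show ?thesis
    proof (intro conjI impI)
      show "\<exists>P B. path (x, P) \<and> pend t (x, P) = y \<and> path (y, B)
            \<and> pend t (y, B) = y \<and> B \<noteq> [] \<and> U = A @ P \<and> Vs = P @ B"
        by (rule exI[of _ P0], rule exI[of _ R]) (simp add: st(1) pend0 pR eR Rne UA R)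
    next
      assume "set U \<inter> set Vs = {}"
      thus "\<exists>n k. 0 < k \<and> k < length A \<and> 1 \<le> n \<and> U = concat (replicate n A) @ take k A"
        using \<open>set U \<inter> set Vs \<noteq> {}\<close> by simp
    qed
  next
    case False
    hence h: "hd P0 = hd A" using o by simp
    have Paa: "basis (apath s (last A) (hd A)) \<notin> I" using st(5) h by simp
    have H: "\<forall>\<gamma>\<in>E. s \<gamma> = x \<and> basis (apath s (last A) \<gamma>) \<notin> I \<longrightarrow> \<gamma> = hd A"
    proof (intro ballI impI)
      fix \<gamma> assume g: "\<gamma> \<in> E" "s \<gamma> = x \<and> basis (apath s (last A) \<gamma>) \<notin> I"
      show "\<gamma> = hd A" using sb_succ[OF la(1) g(1) la(3) _ _ _ Paa] g la(2,4) by simp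
    qed
    obtain n k where nk: "k < length A" "U = concat (replicate n A) @ take k A"
      using per_decomp[OF sca na H u_path u_notin U_ne hdU] by blast
    have setU: "set U \<subseteq> set A" using nk(2) set_take_subset[of k A] by auto
    have Hyp: "\<forall>j. 0 < j \<and> j < length Vs \<and> Vs ! j = hd A \<longrightarrow> Vs ! (j - 1) \<in> set A"
    proof (intro allI impI)
      fix j assume j: "0 < j \<and> j < length Vs \<and> Vs ! j = hd A"
      have sj: "Suc (j - 1) = j" using j by simp
      have p1: "basis (apath s (Vs ! (j - 1)) (hd A)) \<notin> I"
        using pair_notI[OF pv v_notin, of "j - 1"] j sj by simp
      have e: "t (Vs ! (j - 1)) = s (hd A)" using path_nth[OF pv, of "j - 1"] j sj by simp
      have m: "Vs ! (j - 1) \<in> E" using path_set[OF pv] j by (meson less_imp_diff_less nth_mem subsetD)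
      have "Vs ! (j - 1) = last A" using sb_pred[OF la(3) m la(1) e _ p1 Paa] la by simp
      thus "Vs ! (j - 1) \<in> set A" using la(5) by simp
    qed
    have "set Vs \<inter> set A = {}" using no_enter[OF sca na pv v_notin Vs_ne b1notA Hyp] .
    hence disj: "set U \<inter> set Vs = {}" using setU by blast
    have k0: "0 < k"
    proof (rule ccontr)
      assume "\<not> 0 < k"
      hence "U = concat (replicate n A)" using nk by simp
      hence "pend t (x, U) = x" using pend_rep[OF fa(3)] by simp
      thus False using u_end xy by simp
    qed
    have n1: "1 \<le> n"
    proof (rule ccontr)
      assume "\<not> 1 \<le> n"
      hence "U = take k A" using nk by simp
      hence "length U < length A" using nk(1) by simp
      thus False using UA by simp
    qed
    show ?thesis
    proof (intro conjI impI)
      assume "set U \<inter> set Vs \<noteq> {}"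
      thus "\<exists>P B. path (x, P) \<and> pend t (x, P) = y \<and> path (y, B)
            \<and> pend t (y, B) = y \<and> B \<noteq> [] \<and> U = A @ P \<and> Vs = P @ B" using disj by simp
    next
      show "\<exists>n k. 0 < k \<and> k < length A \<and> 1 \<le> n \<and> U = concat (replicate n A) @ take k A"
        using k0 n1 nk by blast
    qed
  qed
qed


lemma part_b:
  assumes sca: "simple_cycle V E s t x (x, A)" and UA: "U = A @ P0" and xy: "x = y"
  shows "\<exists>B. simple_cycle V E s t x (x, B) \<and> set A \<inter> set B = {} \<and>
    (\<exists>n m. (U = concat (replicate n A) \<and> Vs = concat (replicate m B)
             \<and> basis (apath s (last A) (hd B)) \<in> I \<and> basis (apath s (last B) (hd A)) \<in> I)
        \<or> (U = concat (replicate m (A @ B)) \<and> Vs = concat (replicate m (B @ A))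
             \<and> basis (apath s (last A) (hd A)) \<in> I \<and> basis (apath s (last B) (hd B)) \<in> I)
        \<or> (U = concat (replicate m (A @ B)) @ A \<and> Vs = concat (replicate m (B @ A)) @ B
             \<and> basis (apath s (last A) (hd A)) \<in> I \<and> basis (apath s (last B) (hd B)) \<in> I))"
proof -
  note fa = sc_facts[OF sca] and la = sc_last[OF sca]
  have pu: "path (x, A @ P0)" using u_path UA by simp
  have nu: "basis (x, A @ P0) \<notin> I" using u_notin UA by simp
  have pv: "path (x, Vs)" using v_path .
  have na: "basis (x, A) \<notin> I"
  proof
    assume "basis (x, A) \<in> I"
    hence "basis (x, [] @ A @ P0) \<in> I" using sub_I[of x "[]" A P0] pu by simp
    thus False using nu by simp
  qed
  have xV: "x \<in> V" using path_fst'[OF pv] .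
  have hdU: "hd U = hd A" using UA fa(1) by simp
  have b1: "hd Vs \<in> E" "s (hd Vs) = x" using path_set[OF pv] Vs_ne path_hd[OF pv Vs_ne]
    by (auto intro: hd_in_set)
  have ab: "hd A \<noteq> hd Vs" using stepA hdU by simp
  have b1notA: "hd Vs \<notin> set A" using sc_hd_notin[OF sca b1(2)] ab by simp
  have uend: "pend t (x, U) = x" and vend: "pend t (x, Vs) = x" using u_end v_end xy by auto
  have ex: "length Vs - 1 < length Vs \<and> t (Vs ! (length Vs - 1)) = x"
    using vend Vs_ne by (simp add: pend_def last_conv_nth)
  define j0 where "j0 = (LEAST j. j < length Vs \<and> t (Vs ! j) = x)"
  have j0: "j0 < length Vs \<and> t (Vs ! j0) = x" unfolding j0_def by (rule LeastI[of "\<lambda>j. j < length Vs \<and> t (Vs ! j) = x", OF ex])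
  have j0min: "\<And>i. i < j0 \<Longrightarrow> \<not> (i < length Vs \<and> t (Vs ! i) = x)"
    unfolding j0_def by (rule not_less_Least)
  define B where "B = take (Suc j0) Vs"
  have VsB: "Vs = B @ drop (Suc j0) Vs" by (simp add: B_def)
  have Bne: "B \<noteq> []" using Vs_ne by (simp add: B_def)
  have lenB: "length B = Suc j0" using j0 by (simp add: B_def)
  have pB: "path (x, B)" using pv VsB path_app by metis
  have eB: "pend t (x, B) = x"
  proof -
    have "last B = Vs ! j0" using j0 by (simp add: B_def take_Suc_conv_app_nth)
    thus ?thesis using Bne j0 by (simp add: pend_def)
  qed
  have scb: "simple_cycle V E s t x (x, B)"
    unfolding simple_cycle_def
  proof (intro conjI allI impI)
    show "path (x, B)" using pB .
    show "fst (x, B) = x" by simp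
    show "pend t (x, B) = x" using eB .
    show "snd (x, B) \<noteq> []" using Bne by simp
    fix i assume "Suc i < length (snd (x, B))"
    hence i: "i < j0" using lenB by simp
    hence "B ! i = Vs ! i" by (simp add: B_def)
    thus "t (snd (x, B) ! i) \<noteq> x" using j0min[OF i] i j0 by simp
  qed
  have nb: "basis (x, B) \<notin> I"
    using sub_notI[of x "[]" B "drop (Suc j0) Vs"] v_notin pv VsB by simp
  have hdB: "hd B = hd Vs" using VsB Bne by (metis hd_append2)
  note fb = sc_facts[OF scb] and lb = sc_last[OF scb]
  have HypB: "\<forall>j. 0 < j \<and> j < length B \<and> B ! j = hd A \<longrightarrow> B ! (j - 1) \<in> set A"
  proof (intro allI impI)
    fix j assume j: "0 < j \<and> j < length B \<and> B ! j = hd A"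
    hence "s (B ! j) \<noteq> x" using sc_s_nth[OF scb, of j] by simp
    thus "B ! (j - 1) \<in> set A" using j la(4) by simp
  qed
  have disj: "set B \<inter> set A = {}"
    using no_enter[OF sca na pB nb Bne _ HypB] hdB b1notA by simp
  have lab: "last A \<noteq> last B" using disj la(5) lb(5) by auto
  have hab: "hd A \<noteq> hd B" using ab hdB by simp
  define Paa where "Paa = (basis (apath s (last A) (hd A)) \<notin> I)"
  define Pab where "Pab = (basis (apath s (last A) (hd B)) \<notin> I)"
  define Pba where "Pba = (basis (apath s (last B) (hd A)) \<notin> I)"
  define Pbb where "Pbb = (basis (apath s (last B) (hd B)) \<notin> I)"
  have S1: "\<not> (Paa \<and> Pab)"
  proof
    assume "Paa \<and> Pab"
    hence "hd A = hd B" using sb_succ[OF la(1) la(3) lb(3)] la(2,4) lb(4) unfolding Paa_def Pab_def by simp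
    thus False using hab by simp
  qed
  have S2: "\<not> (Pba \<and> Pbb)"
  proof
    assume "Pba \<and> Pbb"
    hence "hd A = hd B" using sb_succ[OF lb(1) la(3) lb(3)] lb(2,4) la(4) unfolding Pba_def Pbb_def by simp
    thus False using hab by simp
  qed
  have S3: "\<not> (Paa \<and> Pba)"
  proof
    assume "Paa \<and> Pba"
    hence "last A = last B" using sb_pred[OF la(3) la(1) lb(1)] la(2,4) lb(2) unfolding Paa_def Pba_def by simp
    thus False using lab by simp
  qed
  have S4: "\<not> (Pab \<and> Pbb)"
  proof
    assume "Pab \<and> Pbb"
    hence "last A = last B" using sb_pred[OF lb(3) la(1) lb(1)] la(2) lb(2,4) unfolding Pab_def Pbb_def by simp
    thus False using lab by simp
  qed
  have Out: "\<And>\<gamma>. \<gamma> \<in> E \<Longrightarrow> s \<gamma> = x \<Longrightarrow> \<gamma> = hd A \<or> \<gamma> = hd B"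
    using out2[OF xV la(3) lb(3) _ la(4) lb(4) _ hab] by blast
  have hdVs: "hd Vs = hd B" using hdB by simp
  show ?thesis
  proof (cases "Paa \<or> Pbb")
    case True
    have Ha: "\<forall>\<gamma>\<in>E. s \<gamma> = x \<and> basis (apath s (last A) \<gamma>) \<notin> I \<longrightarrow> \<gamma> = hd A"
    proof (intro ballI impI)
      fix \<gamma> assume g: "\<gamma> \<in> E" "s \<gamma> = x \<and> basis (apath s (last A) \<gamma>) \<notin> I"
      show "\<gamma> = hd A"
      proof (rule ccontr)
        assume "\<gamma> \<noteq> hd A"
        hence "\<gamma> = hd B" using Out g by blast
        hence Pab using g unfolding Pab_def by simp
        thus False using True S1 S4 by blast
      qed
    qed
    have Hb: "\<forall>\<gamma>\<in>E. s \<gamma> = x \<and> basis (apath s (last B) \<gamma>) \<notin> I \<longrightarrow> \<gamma> = hd B"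
    proof (intro ballI impI)
      fix \<gamma> assume g: "\<gamma> \<in> E" "s \<gamma> = x \<and> basis (apath s (last B) \<gamma>) \<notin> I"
      show "\<gamma> = hd B"
      proof (rule ccontr)
        assume "\<gamma> \<noteq> hd B"
        hence "\<gamma> = hd A" using Out g by blast
        hence Pba using g unfolding Pba_def by simp
        thus False using True S2 S3 by blast
      qed
    qed
    obtain n k where nk: "k < length A" "U = concat (replicate n A) @ take k A"
      using per_decomp[OF sca na Ha u_path u_notin U_ne hdU] by blast
    obtain m k' where mk: "k' < length B" "Vs = concat (replicate m B) @ take k' B"
      using per_decomp[OF scb nb Hb pv v_notin Vs_ne hdVs] by blast
    have k0: "k = 0"
    proof (rule ccontr)
      assume "k \<noteq> 0"
      hence "pend t (x, take k A) \<noteq> x" using sc_take_pend[OF sca] nk(1) by simp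
      moreover have "pend t (x, U) = pend t (x, take k A)"
        using nk(2) pend_rep[OF fa(3), of n] by (simp add: pend_app)
      ultimately show False using uend by simp
    qed
    have k0': "k' = 0"
    proof (rule ccontr)
      assume "k' \<noteq> 0"
      hence "pend t (x, take k' B) \<noteq> x" using sc_take_pend[OF scb] mk(1) by simp
      moreover have "pend t (x, Vs) = pend t (x, take k' B)"
        using mk(2) pend_rep[OF fb(3), of m] by (simp add: pend_app)
      ultimately show False using vend by simp
    qed
    have c1: "\<not> Pab" using True S1 S4 by blast
    have c2: "\<not> Pba" using True S2 S3 by blast
    have eU: "U = concat (replicate n A)" using nk(2) k0 by simp
    have eV: "Vs = concat (replicate m B)" using mk(2) k0' by simp
    show ?thesis
    proof (intro exI[of _ B] conjI)
      show "simple_cycle V E s t x (x, B)" using scb .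
      show "set A \<inter> set B = {}" using disj by blast
      show "\<exists>n m. (U = concat (replicate n A) \<and> Vs = concat (replicate m B)
             \<and> basis (apath s (last A) (hd B)) \<in> I \<and> basis (apath s (last B) (hd A)) \<in> I)
        \<or> (U = concat (replicate m (A @ B)) \<and> Vs = concat (replicate m (B @ A))
             \<and> basis (apath s (last A) (hd A)) \<in> I \<and> basis (apath s (last B) (hd B)) \<in> I)
        \<or> (U = concat (replicate m (A @ B)) @ A \<and> Vs = concat (replicate m (B @ A)) @ B
             \<and> basis (apath s (last A) (hd A)) \<in> I \<and> basis (apath s (last B) (hd B)) \<in> I)"
        apply (rule exI[of _ n], rule exI[of _ m], rule disjI1)
        using eU eV c1 c2 unfolding Pab_def Pba_def by simp
    qed
  next
    case False
    have H1: "\<forall>\<gamma>\<in>E. s \<gamma> = x \<and> basis (apath s (last A) \<gamma>) \<notin> I \<longrightarrow> \<gamma> = hd B"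
    proof (intro ballI impI)
      fix \<gamma> assume g: "\<gamma> \<in> E" "s \<gamma> = x \<and> basis (apath s (last A) \<gamma>) \<notin> I"
      show "\<gamma> = hd B"
      proof (rule ccontr)
        assume "\<gamma> \<noteq> hd B"
        hence "\<gamma> = hd A" using Out g by blast
        hence Paa using g unfolding Paa_def by simp
        thus False using False by blast
      qed
    qed
    have H2: "\<forall>\<gamma>\<in>E. s \<gamma> = x \<and> basis (apath s (last B) \<gamma>) \<notin> I \<longrightarrow> \<gamma> = hd A"
    proof (intro ballI impI)
      fix \<gamma> assume g: "\<gamma> \<in> E" "s \<gamma> = x \<and> basis (apath s (last B) \<gamma>) \<notin> I"
      show "\<gamma> = hd A"
      proof (rule ccontr)
        assume "\<gamma> \<noteq> hd A"
        hence "\<gamma> = hd B" using Out g by blast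
        hence Pbb using g unfolding Pbb_def by simp
        thus False using False by blast
      qed
    qed
    note ad = alt_decomp[OF sca na scb nb H1 H2]
    obtain Nu where Nu: "U = alt A B Nu" using ad[OF u_path u_notin U_ne uend] hdU by blast
    obtain Nv where Nv: "Vs = alt B A Nv" using ad[OF pv v_notin Vs_ne vend] hdVs by blast
    have le1: "Nu \<le> Nv"
    proof (rule ccontr)
      assume "\<not> Nu \<le> Nv"
      then obtain N' where N': "Nu = Suc N'" "Nv \<le> N'" by (intro that[of "Nu - 1"]) auto
      obtain R where "alt B A (Nv + (N' - Nv)) = alt B A Nv @ R" using alt_prefix by blast
      hence "U = A @ Vs @ R" using Nu Nv N' by simp
      thus False using noA_V[OF sca] by blast
    qed
    have le2: "Nv \<le> Nu"
    proof (rule ccontr)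
      assume "\<not> Nv \<le> Nu"
      then obtain N' where N': "Nv = Suc N'" "Nu \<le> N'" by (intro that[of "Nv - 1"]) auto
      obtain R where "alt A B (Nu + (N' - Nu)) = alt A B Nu @ R" using alt_prefix by blast
      hence "Vs = B @ U @ R" using Nu Nv N' by simp
      thus False using noB_U[OF scb] by blast
    qed
    have eqN: "Nu = Nv" using le1 le2 by simp
    have c: "basis (apath s (last A) (hd A)) \<in> I" "basis (apath s (last B) (hd B)) \<in> I"
      using False unfolding Paa_def Pbb_def by auto
    have "Nu = 2 * (Nu div 2) \<or> Nu = Suc (2 * (Nu div 2))" by presburger
    thus ?thesis
    proof
      assume e: "Nu = 2 * (Nu div 2)"
      have "U = concat (replicate (Nu div 2) (A @ B))" "Vs = concat (replicate (Nu div 2) (B @ A))"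
        using Nu Nv eqN e alt_even by metis+
      thus ?thesis
        apply (intro exI[of _ B] conjI)
          apply (rule scb)
         using disj apply blast
        apply (rule exI[of _ 0], rule exI[of _ "Nu div 2"], rule disjI2, rule disjI1)
        using c by simp
    next
      assume e: "Nu = Suc (2 * (Nu div 2))"
      have "U = concat (replicate (Nu div 2) (A @ B)) @ A" "Vs = concat (replicate (Nu div 2) (B @ A)) @ B"
        using Nu Nv eqN e alt_odd by metis+
      thus ?thesis
        apply (intro exI[of _ B] conjI)
          apply (rule scb)
         using disj apply blast
        apply (rule exI[of _ 0], rule exI[of _ "Nu div 2"], rule disjI2, rule disjI2)
        using c by simp
    qed
  qed
qed

end


theorem lemma2p1:
  fixes V :: "'v set" and E :: "'a set" and s t :: "'a \<Rightarrow> 'v"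
    and I :: "(('v \<times> 'a list) \<Rightarrow> 'k::alg_closed_field) set"
    and u v a :: "'v \<times> 'a list" and x y :: 'v and lam :: 'k
  assumes quiver: "finite_quiver V E s t"
    and adm: "admissible V E s t I"
    and sb: "special_biserial V E s t I"
    and u_path: "is_path V E s t u" and v_path: "is_path V E s t v"
    and u_start: "fst u = x" and v_start: "fst v = x"
    and u_end: "pend t u = y" and v_end: "pend t v = y"
    and uv: "u \<noteq> v"
    and u_notin: "basis u \<notin> I" and v_notin: "basis v \<notin> I"
    and lam: "lam \<noteq> 0"
    and rel: "(\<lambda>w. basis u w - lam * basis v w) \<in> I"
    and a_cyc: "simple_cycle V E s t x a"
    and u_starts: "\<exists>p. is_path V E s t p \<and> fst p = x \<and> u = pcomp a p"
  shows "(x \<noteq> y \<longrightarrow>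
            (set (snd u) \<inter> set (snd v) \<noteq> {} \<longrightarrow>
               (\<exists>p b. is_path V E s t p \<and> fst p = x \<and> pend t p = y
                   \<and> is_path V E s t b \<and> fst b = y \<and> pend t b = y \<and> snd b \<noteq> []
                   \<and> u = pcomp a p \<and> v = pcomp p b))
          \<and> (set (snd u) \<inter> set (snd v) = {} \<longrightarrow>
               (\<exists>a1 a2 n. is_path V E s t a1 \<and> is_path V E s t a2
                   \<and> snd a1 \<noteq> [] \<and> snd a2 \<noteq> [] \<and> fst a2 = pend t a1
                   \<and> a = pcomp a1 a2 \<and> n \<ge> 1 \<and> u = pcomp (ppow a n) a1)))
       \<and> (x = y \<longrightarrow>
            (\<exists>b. simple_cycle V E s t x b \<and> set (snd a) \<inter> set (snd b) = {}
               \<and> (\<exists>n m::nat.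
                    (u = ppow a n \<and> v = ppow b m
                       \<and> basis (apath s (last (snd a)) (hd (snd b))) \<in> I
                       \<and> basis (apath s (last (snd b)) (hd (snd a))) \<in> I)
                  \<or> (u = ppow (pcomp a b) m \<and> v = ppow (pcomp b a) m
                       \<and> basis (apath s (last (snd a)) (hd (snd a))) \<in> I
                       \<and> basis (apath s (last (snd b)) (hd (snd b))) \<in> I)
                  \<or> (u = pcomp (ppow (pcomp a b) m) a \<and> v = pcomp (ppow (pcomp b a) m) b
                       \<and> basis (apath s (last (snd a)) (hd (snd a))) \<in> I
                       \<and> basis (apath s (last (snd b)) (hd (snd b))) \<in> I))))"
proof -
  interpret sbq V E s t I using quiver adm sb by unfold_locales
  obtain p0 where p0: "is_path V E s t p0" "fst p0 = x" "u = pcomp a p0" using u_starts by blast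
  obtain A where aA: "a = (x, A)" using a_cyc unfolding simple_cycle_def by (cases a) auto
  obtain U0 where uU: "u = (x, U0)" using u_start by (cases u) auto
  obtain V0 where vV: "v = (x, V0)" using v_start by (cases v) auto
  obtain P0 where pP: "p0 = (x, P0)" using p0(2) by (cases p0) auto
  have UA: "U0 = A @ P0" using p0(3) unfolding uU aA pP pcomp_def by simp
  have sca: "simple_cycle V E s t x (x, A)" using a_cyc unfolding aA .
  interpret R: rel V E s t I U0 V0 x y lam
    by unfold_locales (use u_path v_path u_end v_end uv u_notin v_notin lam rel in
        \<open>simp_all add: uU vV\<close>)
  have Ane: "A \<noteq> []" using sc_facts(1)[OF sca] .
  have pA: "is_path V E s t (x, A)" using sc_facts(2)[OF sca] .
  show ?thesis
    unfolding uU vV aA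
  proof (intro conjI impI)
    assume xy: "x \<noteq> y"
    note pa = R.part_a[OF sca UA xy]
    {
      assume "set (snd (x, U0)) \<inter> set (snd (x, V0)) \<noteq> {}"
      then obtain P B where PB: "is_path V E s t (x, P)" "pend t (x, P) = y" "is_path V E s t (y, B)"
          "pend t (y, B) = y" "B \<noteq> []" "U0 = A @ P" "V0 = P @ B"
        using pa by auto
      show "\<exists>p b. is_path V E s t p \<and> fst p = x \<and> pend t p = y
                   \<and> is_path V E s t b \<and> fst b = y \<and> pend t b = y \<and> snd b \<noteq> []
                   \<and> (x, U0) = pcomp (x, A) p \<and> (x, V0) = pcomp p b"
        by (rule exI[of _ "(x, P)"], rule exI[of _ "(y, B)"]) (simp add: PB pcomp_def)
    }
    {
      assume "set (snd (x, U0)) \<inter> set (snd (x, V0)) = {}"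
      then obtain n k where nk: "0 < k" "k < length A" "1 \<le> n" "U0 = concat (replicate n A) @ take k A"
        using pa by auto
      have pa2: "is_path V E s t (x, take k A @ drop k A)" using pA by simp
      have p1: "is_path V E s t (x, take k A)" and p2: "is_path V E s t (pend t (x, take k A), drop k A)"
        using pa2 unfolding path_app by auto
      show "\<exists>a1 a2 n. is_path V E s t a1 \<and> is_path V E s t a2
                   \<and> snd a1 \<noteq> [] \<and> snd a2 \<noteq> [] \<and> fst a2 = pend t a1
                   \<and> (x, A) = pcomp a1 a2 \<and> n \<ge> 1 \<and> (x, U0) = pcomp (ppow (x, A) n) a1"
        apply (rule exI[of _ "(x, take k A)"], rule exI[of _ "(pend t (x, take k A), drop k A)"],
               rule exI[of _ n])
        using p1 p2 nk Ane by (simp add: pcomp_def ppow_def)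
    }
  next
    assume xy: "x = y"
    obtain B where B: "simple_cycle V E s t x (x, B)" "set A \<inter> set B = {}"
      "\<exists>n m. (U0 = concat (replicate n A) \<and> V0 = concat (replicate m B)
             \<and> basis (apath s (last A) (hd B)) \<in> I \<and> basis (apath s (last B) (hd A)) \<in> I)
        \<or> (U0 = concat (replicate m (A @ B)) \<and> V0 = concat (replicate m (B @ A))
             \<and> basis (apath s (last A) (hd A)) \<in> I \<and> basis (apath s (last B) (hd B)) \<in> I)
        \<or> (U0 = concat (replicate m (A @ B)) @ A \<and> V0 = concat (replicate m (B @ A)) @ B
             \<and> basis (apath s (last A) (hd A)) \<in> I \<and> basis (apath s (last B) (hd B)) \<in> I)"
      using R.part_b[OF sca UA xy] by blast
    obtain n m where nm: "(U0 = concat (replicate n A) \<and> V0 = concat (replicate m B)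
             \<and> basis (apath s (last A) (hd B)) \<in> I \<and> basis (apath s (last B) (hd A)) \<in> I)
        \<or> (U0 = concat (replicate m (A @ B)) \<and> V0 = concat (replicate m (B @ A))
             \<and> basis (apath s (last A) (hd A)) \<in> I \<and> basis (apath s (last B) (hd B)) \<in> I)
        \<or> (U0 = concat (replicate m (A @ B)) @ A \<and> V0 = concat (replicate m (B @ A)) @ B
             \<and> basis (apath s (last A) (hd A)) \<in> I \<and> basis (apath s (last B) (hd B)) \<in> I)"
      using B(3) by blast
    show "\<exists>b. simple_cycle V E s t x b \<and> set (snd (x, A)) \<inter> set (snd b) = {}
               \<and> (\<exists>n m::nat.
                    ((x, U0) = ppow (x, A) n \<and> (x, V0) = ppow b m
                       \<and> basis (apath s (last (snd (x, A))) (hd (snd b))) \<in> I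
                       \<and> basis (apath s (last (snd b)) (hd (snd (x, A)))) \<in> I)
                  \<or> ((x, U0) = ppow (pcomp (x, A) b) m \<and> (x, V0) = ppow (pcomp b (x, A)) m
                       \<and> basis (apath s (last (snd (x, A))) (hd (snd (x, A)))) \<in> I
                       \<and> basis (apath s (last (snd b)) (hd (snd b))) \<in> I)
                  \<or> ((x, U0) = pcomp (ppow (pcomp (x, A) b) m) (x, A) \<and> (x, V0) = pcomp (ppow (pcomp b (x, A)) m) b
                       \<and> basis (apath s (last (snd (x, A))) (hd (snd (x, A)))) \<in> I
                       \<and> basis (apath s (last (snd b)) (hd (snd b))) \<in> I))"
      apply (rule exI[of _ "(x, B)"])
      apply (simp add: ppow_def pcomp_def B(1,2))
      apply (rule exI[of _ n], rule exI[of _ m])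
      using nm by blast
  qed
qed

end
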